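(* Let $m\ge 1$ and let $A$ be a $2m\times 2$ binary-block matrix. Then $$\operatorname{M}(AD_m(\operatorname{wt}_A)) = 2^{t}\,\operatorname{M}(AD_{m-1}(\operatorname{wt}_{\operatorname{sh}(A)})),$$ where $t$ is the number of blocks of $A$ equal to $\begin{bmatrix}1&1\\1&1\end{bmatrix}$ (i.e. the number of $0$ terms in $\operatorname{code}(A)$).
   Context: The Aztec diamond graph $AD_n$ is the planar dual graph of the Aztec diamond region of order $n$ (the union of unit squares inside $|x|+|y|=n+1$), rotated by $45^\circ$; it consists of $n$ rows and $n$ columns of 4-cycles called d-cells. The centers of the edges of $AD_n$ form a $2n\times 2n$ array, where the four edges of the d-cell in row $i$, column $j$ occupy rows $2i-1,2i$ and columns $2j-1,2j$ of the array (placed according to their position around the d-cell). A weighted $AD_n$ is given by a $2n\times 2n$ weight matrix whose entries are the edge weights. $\operatorname{M}(G)$ for a weighted graph is the sum over perfect matchings of the product of the weights of their edges; $\operatorname{M}(AD_0)=1$. For a $k\times l$ matrix $A$ with $k,l$ even, $AD_n(\operatorname{wt}_A)$ denotes $AD_n$ whose weight matrix is obtained by placing $A$ in the upper-left corner of the $2n\times 2n$ array and filling the rest periodically (translating $A$ by $l$ columns to the right and $k$ rows down; partial copies allowed at the edges). A $2m\times 2$ matrix $M$ with $2\times 2$ blocks $M_1,\dots,M_m$ (stacked vertically) is a binary-block matrix if each $M_i$ is one of $\begin{bmatrix}1&1\\1&1\end{bmatrix}$, $\begin{bmatrix}1&1\\1&0\end{bmatrix}$, $\begin{bmatrix}0&1\\1&1\end{bmatrix}$,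 $\begin{bmatrix}0&1\\1&0\end{bmatrix}$; its encoded sequence $\operatorname{code}(M)=(s_1,\dots,s_m)$ has $s_i=0,+,-,\pm$ respectively. The operator $\operatorname{sh}$: $\operatorname{sh}(M)$ is the binary-block matrix whose encoded sequence is obtained from $\operatorname{code}(M)$ as follows (a $\pm$ is regarded as a $+$ and a $-$ at the same position): delete all $0$ terms, leaving those positions empty; simultaneously move every $+$ one position to the left cyclically (a $+$ at position $1$ goes to position $m$), leaving its old position empty if nothing else is there; positions $-$ stay fixed; a position holding both a $+$ and a $-$ becomes $\pm$; finally fill all empty positions with $0$. *)

theory Defs
  imports Main
begin

text \<open>Vertices are integer points (x,y) (x to the right, y downwards).
  The d-cell in row i, column j (1-based) is the 4-cycle with centre (2j,2i) and
  vertices W=(2j-1,2i), N=(2j,2i-1), E=(2j+1,2i), S=(2j,2i+1).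
  Edges are indexed by positions (r,c) of the 2n x 2n array, r,c in {1..2n}; position
  (r,c) is an edge of the d-cell ((r+1) div 2, (c+1) div 2): top-left = WN,
  top-right = NE, bottom-left = WS, bottom-right = SE.\<close>

definition AD_pos :: "nat \<Rightarrow> (nat \<times> nat) set" where
  "AD_pos n = {1..2*n} \<times> {1..2*n}"

definition AD_ends :: "nat \<times> nat \<Rightarrow> (nat \<times> nat) set" where
  "AD_ends p = (let r = fst p; c = snd p; i = (r + 1) div 2; j = (c + 1) div 2;
      W = (2*j - 1, 2*i); E = (2*j + 1, 2*i); N = (2*j, 2*i - 1); S = (2*j, 2*i + 1)
    in if odd r then (if odd c then {W, N} else {N, E})
       else (if odd c then {W, S} else {S, E}))"

definition AD_verts :: "nat \<Rightarrow> (nat \<times> nat) set" where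
  "AD_verts n = (\<Union>p \<in> AD_pos n. AD_ends p)"

definition AD_perfect_matching :: "nat \<Rightarrow> (nat \<times> nat) set \<Rightarrow> bool" where
  "AD_perfect_matching n S \<longleftrightarrow> S \<subseteq> AD_pos n \<and>
     (\<forall>v \<in> AD_verts n. card {e \<in> S. v \<in> AD_ends e} = 1)"

definition AD_M :: "nat \<Rightarrow> (nat \<Rightarrow> nat \<Rightarrow> 'a::comm_semiring_1) \<Rightarrow> 'a" where
  "AD_M n w = (\<Sum>S \<in> {S. AD_perfect_matching n S}. \<Prod>e \<in> S. w (fst e) (snd e))"

definition wt :: "nat \<Rightarrow> nat \<Rightarrow> (nat \<Rightarrow> nat \<Rightarrow> 'a) \<Rightarrow> nat \<Rightarrow> nat \<Rightarrow> 'a" where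
  "wt k l A r c = A ((r - 1) mod k + 1) ((c - 1) mod l + 1)"

text \<open>Code symbols: Z = 0, P = +, Mi = -, PM = \<plusminus>.\<close>
datatype bsym = Z | P | Mi | PM

definition has_plus :: "bsym \<Rightarrow> bool" where
  "has_plus s \<longleftrightarrow> s = P \<or> s = PM"

definition has_minus :: "bsym \<Rightarrow> bool" where
  "has_minus s \<longleftrightarrow> s = Mi \<or> s = PM"

definition mk_sym :: "bool \<Rightarrow> bool \<Rightarrow> bsym" where
  "mk_sym pl mi = (if pl \<and> mi then PM else if pl then P else if mi then Mi else Z)"

text \<open>2x2 block of a symbol, local indices a,b in {0,1}:
  Z=[1 1;1 1], P=[1 1;1 0], Mi=[0 1;1 1], PM=[0 1;1 0].\<close>
definition block_entry :: "bsym \<Rightarrow> nat \<Rightarrow> nat \<Rightarrow> nat" where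
  "block_entry s a b =
     (if a = 0 \<and> b = 0 then (if has_minus s then 0 else 1)
      else if a = 1 \<and> b = 1 then (if has_plus s then 0 else 1)
      else 1)"

definition bbmat :: "bsym list \<Rightarrow> nat \<Rightarrow> nat \<Rightarrow> nat" where
  "bbmat cs r c = block_entry (cs ! ((r - 1) div 2)) ((r - 1) mod 2) (c - 1)"

text \<open>sh on encoded sequences (0-based list positions): the new position i receives
  a + from old position (i+1) mod m (cyclic move one to the left) and keeps its own -.\<close>
definition shcode :: "bsym list \<Rightarrow> bsym list" where
  "shcode cs = (let m = length cs in
     map (\<lambda>i. mk_sym (has_plus (cs ! ((i + 1) mod m))) (has_minus (cs ! i))) [0..<m])"

end

theory Submission
  imports Defs
begin


definition lw :: "int \<Rightarrow> int \<Rightarrow> bool \<Rightarrow> bool \<Rightarrow> bool \<Rightarrow> bool \<Rightarrow> int" where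
 "lw a d s h u h' = (if \<not>s \<and> \<not>h \<and> \<not>u \<and> \<not>h' then a
   else if \<not>s \<and> h \<and> \<not>u \<and> h' then 1
   else if s \<and> \<not>h \<and> u \<and> \<not>h' then 1
   else if s \<and> h \<and> u \<and> h' then d
   else if \<not>s \<and> \<not>h \<and> u \<and> h' then 1 + a*d
   else if s \<and> h \<and> \<not>u \<and> \<not>h' then 1 else 0)"

fun rw :: "int \<Rightarrow> int \<Rightarrow> bool \<Rightarrow> bool \<Rightarrow> bool list \<Rightarrow> bool list \<Rightarrow> int" where
 "rw a d h e [] [] = (if h = e then 1 else 0)"
| "rw a d h e (s#S) (t#T) = lw a d s h t False * rw a d False e S T + lw a d s h t True * rw a d True e S T"
| "rw a d h e _ _ = 0"

definition blists :: "nat \<Rightarrow> bool list set" where "blists n = {xs. length xs = n}"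

fun Pt :: "(int \<times> int) list \<Rightarrow> bool list \<Rightarrow> bool list \<Rightarrow> int" where
 "Pt [] S E = (if S = E then 1 else 0)"
| "Pt ((a,d)#rs) S E = (\<Sum>U\<in>blists (length S). rw a d False True S U * Pt rs U E)"

lemma finite_blists[simp]: "finite (blists n)"
proof -
  have "blists n = {xs. set xs \<subseteq> UNIV \<and> length xs = n}" by (auto simp: blists_def)
  then show ?thesis using finite_lists_length_eq[of "UNIV::bool set" n] by simp
qed

lemma blists_Suc: "blists (Suc n) = Cons True ` blists n \<union> Cons False ` blists n"
  by (auto simp: blists_def length_Suc_conv image_iff)

lemma sum_blists_Suc: "(\<Sum>xs\<in>blists (Suc n). f xs) = (\<Sum>xs\<in>blists n. f (True#xs)) + (\<Sum>xs\<in>blists n. f (False#xs))"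
  unfolding blists_Suc
  by (subst sum.union_disjoint) (auto simp: sum.reindex)

lemma blists_Suc_snoc: "blists (Suc n) = (\<lambda>xs. xs@[True]) ` blists n \<union> (\<lambda>xs. xs@[False]) ` blists n"
proof -
  have "xs \<in> (\<lambda>xs. xs@[True]) ` blists n \<union> (\<lambda>xs. xs@[False]) ` blists n" if len: "length xs = Suc n" for xs
  proof -
    obtain ys y where xy: "xs = ys @ [y]" using len by (cases xs rule: rev_cases) auto
    with len have ys: "ys \<in> blists n" by (simp add: blists_def)
    show ?thesis
    proof (cases y)
      case True then show ?thesis using xy ys by blast
    next
      case False then show ?thesis using xy ys by blast
    qed
  qed
  moreover have "(\<lambda>xs. xs@[True]) ` blists n \<union> (\<lambda>xs. xs@[False]) ` blists n \<subseteq> blists (Suc n)"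
    by (auto simp: blists_def)
  ultimately show ?thesis unfolding blists_def[of "Suc n"] by blast
qed

lemma sum_blists_snoc: "(\<Sum>xs\<in>blists (Suc n). f xs) = (\<Sum>xs\<in>blists n. f (xs@[True])) + (\<Sum>xs\<in>blists n. f (xs@[False]))"
proof -
  have i1: "inj_on (\<lambda>xs. xs@[b]) A" for b :: bool and A by (rule inj_onI) simp
  have d: "(\<lambda>xs. xs@[True]) ` blists n \<inter> (\<lambda>xs. xs@[False]) ` blists n = {}" by auto
  show ?thesis unfolding blists_Suc_snoc
    by (simp add: sum.union_disjoint[OF _ _ d] sum.reindex[OF i1])
qed

lemma rw_len: "length S \<noteq> length T \<Longrightarrow> rw a d h e S T = 0"
  by (induction a d h e S T rule: rw.induct) auto

lemma P_comp: "Pt (rs1 @ rs2) S E = (\<Sum>U\<in>blists (length S). Pt rs1 S U * Pt rs2 U E)"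
proof (induction rs1 arbitrary: S)
  case Nil
  have "(\<Sum>U\<in>blists (length S). (if S = U then 1 else 0) * Pt rs2 U E) = (\<Sum>U\<in>blists (length S). if S = U then Pt rs2 U E else 0)"
    by (rule sum.cong) auto
  also have "\<dots> = Pt rs2 S E" by (subst sum.delta'[OF finite_blists]) (simp add: blists_def)
  finally have "(\<Sum>U\<in>blists (length S). (if S = U then 1 else 0) * Pt rs2 U E) = Pt rs2 S E" .
  then show ?case by simp
next
  case (Cons r rs1)
  obtain a d where r: "r = (a,d)" by force
  have "Pt (r # rs1 @ rs2) S E = (\<Sum>U\<in>blists (length S). rw a d False True S U * (\<Sum>V\<in>blists (length S). Pt rs1 U V * Pt rs2 V E))"
    using Cons.IH by (auto simp: r blists_def intro!: sum.cong)
  also have "\<dots> = (\<Sum>V\<in>blists (length S). (\<Sum>U\<in>blists (length S). rw a d False True S U * Pt rs1 U V) * Pt rs2 V E)"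
    by (simp add: sum_distrib_left sum_distrib_right mult.assoc) (rule sum.swap)
  finally show ?case by (simp add: r)
qed


definition bs4 :: "(bool \<Rightarrow> bool \<Rightarrow> int) \<Rightarrow> int" where
  "bs4 f = f False False + f False True + f True False + f True True"

definition M2 :: "int\<Rightarrow>int\<Rightarrow>int\<Rightarrow>int\<Rightarrow>bool\<Rightarrow>bool\<Rightarrow>bool\<Rightarrow>bool\<Rightarrow>bool\<Rightarrow>bool\<Rightarrow>int" where
 "M2 a d a' d' s t g1 g2 h1 h2 = lw a d s g1 False h1 * lw a' d' False g2 t h2 + lw a d s g1 True h1 * lw a' d' True g2 t h2"

fun D :: "int\<Rightarrow>int\<Rightarrow>int\<Rightarrow>int\<Rightarrow>bool\<Rightarrow>bool\<Rightarrow>bool\<Rightarrow>bool\<Rightarrow>bool list\<Rightarrow>bool list\<Rightarrow>int" where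
  "D a d a' d' g1 g2 e1 e2 [] [] = (if g1 = e1 \<and> g2 = e2 then 1 else 0)"
| "D a d a' d' g1 g2 e1 e2 (s#S) (t#T) = bs4 (\<lambda>h1 h2. M2 a d a' d' s t g1 g2 h1 h2 * D a d a' d' h1 h2 e1 e2 S T)"
| "D a d a' d' g1 g2 e1 e2 _ _ = 0"

definition Rm :: "int\<Rightarrow>int\<Rightarrow>int\<Rightarrow>int\<Rightarrow>bool\<Rightarrow>bool\<Rightarrow>bool\<Rightarrow>bool\<Rightarrow>int" where
"Rm a d a' d' g1 g2 h1 h2 = (if \<not>g1 \<and> \<not>g2 \<and> \<not>h1 \<and> \<not>h2 then 1 + a'*d
  else if g1 \<and> g2 \<and> h1 \<and> h2 then 1 + a*d'
  else if \<not>g1 \<and> g2 \<and> \<not>h1 \<and> h2 then 1 + a'*d'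
  else if \<not>g1 \<and> g2 \<and> h1 \<and> \<not>h2 then d - d'
  else if g1 \<and> \<not>g2 \<and> \<not>h1 \<and> h2 then a - a'
  else if g1 \<and> \<not>g2 \<and> h1 \<and> \<not>h2 then 1 + a*d else 0)"

lemma ybe_local: "bs4 (\<lambda>k1 k2. Rm a d a' d' g1 g2 k1 k2 * M2 a d a' d' s t k1 k2 h1 h2) =
   bs4 (\<lambda>k1 k2. M2 a' d' a d s t g1 g2 k1 k2 * Rm a d a' d' k1 k2 h1 h2)"
  by (cases s; cases t; cases g1; cases g2; cases h1; cases h2) (simp_all add: bs4_def Rm_def M2_def lw_def algebra_simps)

lemma D_eq: "length S = length T \<Longrightarrow>
  (\<Sum>U\<in>blists (length S). rw a d g1 e1 S U * rw a' d' g2 e2 U T) = D a d a' d' g1 g2 e1 e2 S T"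
proof (induction S T arbitrary: g1 g2 rule: list_induct2)
  case Nil
  have "blists 0 = {[]}" by (auto simp: blists_def)
  then show ?case by simp
next
  case (Cons s S t T)
  have "(\<Sum>U\<in>blists (length (s#S)). rw a d g1 e1 (s#S) U * rw a' d' g2 e2 U (t#T)) =
    (\<Sum>U\<in>blists (length S). rw a d g1 e1 (s#S) (True#U) * rw a' d' g2 e2 (True#U) (t#T)
       + rw a d g1 e1 (s#S) (False#U) * rw a' d' g2 e2 (False#U) (t#T))"
    by (simp add: sum_blists_Suc sum.distrib)
  also have "\<dots> = (\<Sum>U\<in>blists (length S).
      M2 a d a' d' s t g1 g2 False False * (rw a d False e1 S U * rw a' d' False e2 U T)
    + M2 a d a' d' s t g1 g2 False True * (rw a d False e1 S U * rw a' d' True e2 U T)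
    + M2 a d a' d' s t g1 g2 True False * (rw a d True e1 S U * rw a' d' False e2 U T)
    + M2 a d a' d' s t g1 g2 True True * (rw a d True e1 S U * rw a' d' True e2 U T))"
    by (rule sum.cong) (simp_all add: M2_def algebra_simps)
  also have "\<dots> = D a d a' d' g1 g2 e1 e2 (s#S) (t#T)"
    by (simp add: sum.distrib sum_distrib_left[symmetric] Cons.IH bs4_def)
  finally show ?case .
qed

lemma bs4_cong: "(\<And>x y. f x y = g x y) \<Longrightarrow> bs4 f = bs4 g" by (simp add: bs4_def)

lemma train: "length S = length T \<Longrightarrow>
  bs4 (\<lambda>h1 h2. Rm a d a' d' g1 g2 h1 h2 * D a d a' d' h1 h2 e1 e2 S T) =
  bs4 (\<lambda>k1 k2. D a' d' a d g1 g2 k1 k2 S T * Rm a d a' d' k1 k2 e1 e2)"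
proof (induction S T arbitrary: g1 g2 rule: list_induct2)
  case Nil
  show ?case by (cases g1; cases g2; cases e1; cases e2) (simp_all add: bs4_def)
next
  case (Cons s S t T)
  let ?R = "Rm a d a' d'"
  let ?X = "M2 a d a' d' s t" and ?Y = "M2 a' d' a d s t"
  let ?DX = "\<lambda>h1 h2. D a d a' d' h1 h2 e1 e2 S T" and ?DY = "\<lambda>h1 h2 k1 k2. D a' d' a d h1 h2 k1 k2 S T"
  have "bs4 (\<lambda>h1 h2. ?R g1 g2 h1 h2 * D a d a' d' h1 h2 e1 e2 (s#S) (t#T))
      = bs4 (\<lambda>h1 h2. ?R g1 g2 h1 h2 * bs4 (\<lambda>k1 k2. ?X h1 h2 k1 k2 * ?DX k1 k2))" by simp
  also have "\<dots> = bs4 (\<lambda>k1 k2. bs4 (\<lambda>h1 h2. ?R g1 g2 h1 h2 * ?X h1 h2 k1 k2) * ?DX k1 k2)"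
    by (simp add: bs4_def algebra_simps)
  also have "\<dots> = bs4 (\<lambda>k1 k2. bs4 (\<lambda>h1 h2. ?Y g1 g2 h1 h2 * ?R h1 h2 k1 k2) * ?DX k1 k2)"
    by (rule bs4_cong) (simp add: ybe_local)
  also have "\<dots> = bs4 (\<lambda>h1 h2. ?Y g1 g2 h1 h2 * bs4 (\<lambda>k1 k2. ?R h1 h2 k1 k2 * ?DX k1 k2))"
    by (simp add: bs4_def algebra_simps)
  also have "\<dots> = bs4 (\<lambda>h1 h2. ?Y g1 g2 h1 h2 * bs4 (\<lambda>k1 k2. ?DY h1 h2 k1 k2 * ?R k1 k2 e1 e2))"
    by (rule bs4_cong) (simp add: Cons.IH)
  also have "\<dots> = bs4 (\<lambda>k1 k2. bs4 (\<lambda>h1 h2. ?Y g1 g2 h1 h2 * ?DY h1 h2 k1 k2) * ?R k1 k2 e1 e2)"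
    by (simp add: bs4_def algebra_simps)
  also have "\<dots> = bs4 (\<lambda>k1 k2. D a' d' a d g1 g2 k1 k2 (s#S) (t#T) * ?R k1 k2 e1 e2)"
    by simp
  finally show ?case .
qed


lemma D_swap: "length S = length T \<Longrightarrow>
  (1 + a'*d) * D a d a' d' False False True True S T = (1 + a*d') * D a' d' a d False False True True S T"
  using train[of S T a d a' d' False False True True] by (simp add: bs4_def Rm_def algebra_simps)

lemma P_two: "Pt ((a,d)#(a',d')#rs) S E =
  (\<Sum>V\<in>blists (length S). D a d a' d' False False True True S V * Pt rs V E)"
proof -
  have "Pt ((a,d)#(a',d')#rs) S E = (\<Sum>U\<in>blists (length S). rw a d False True S U *
      (\<Sum>V\<in>blists (length S). rw a' d' False True U V * Pt rs V E))"
    by (auto simp: blists_def intro!: sum.cong)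
  also have "\<dots> = (\<Sum>V\<in>blists (length S). (\<Sum>U\<in>blists (length S). rw a d False True S U * rw a' d' False True U V) * Pt rs V E)"
    by (simp add: sum_distrib_left sum_distrib_right mult.assoc) (rule sum.swap)
  also have "\<dots> = (\<Sum>V\<in>blists (length S). D a d a' d' False False True True S V * Pt rs V E)"
  proof (rule sum.cong[OF refl])
    fix V assume "V \<in> blists (length S)"
    then show "(\<Sum>U\<in>blists (length S). rw a d False True S U * rw a' d' False True U V) * Pt rs V E =
       D a d a' d' False False True True S V * Pt rs V E" using D_eq[of S V] by (simp add: blists_def)
  qed
  finally show ?thesis .
qed

lemma P_swap: "(1 + a'*d) * Pt ((a,d)#(a',d')#rs) S E = (1 + a*d') * Pt ((a',d')#(a,d)#rs) S E"
  unfolding P_two sum_distrib_left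
proof (rule sum.cong[OF refl])
  fix V assume "V \<in> blists (length S)"
  then have "(1 + a'*d) * D a d a' d' False False True True S V = (1 + a*d') * D a' d' a d False False True True S V"
    by (intro D_swap) (simp add: blists_def)
  then show "(1 + a'*d) * (D a d a' d' False False True True S V * Pt rs V E) = (1 + a*d') * (D a' d' a d False False True True S V * Pt rs V E)"
    by (simp only: mult.assoc[symmetric])
qed

lemma P_swap_mid: "(1 + a'*d) * Pt (pre @ (a,d)#(a',d')#rs) S E = (1 + a*d') * Pt (pre @ (a',d')#(a,d)#rs) S E"
  unfolding P_comp sum_distrib_left
  by (rule sum.cong[OF refl]) (simp only: mult.left_commute[of "1 + a'*d"] mult.left_commute[of "1 + a*d'"] P_swap)

lemma rw_top: "length T = k \<Longrightarrow> rw a d h True (replicate k False) T = (if h then 1 else 1 + a*d) * rw a 0 h True (replicate k False) T"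
proof (induction k arbitrary: h T)
  case 0 then show ?case by (cases h) auto
next
  case (Suc k)
  then obtain t T' where T: "T = t#T'" "length T' = k" by (cases T) auto
  show ?case using Suc.IH[OF T(2)] by (cases h; cases t) (simp_all add: T lw_def)
qed

lemma P_top: "Pt ((a,d)#rs) (replicate k False) E = (1 + a*d) * Pt ((a,0)#rs) (replicate k False) E"
proof -
  have "Pt ((a,d)#rs) (replicate k False) E = (\<Sum>U\<in>blists k. rw a d False True (replicate k False) U * Pt rs U E)" by simp
  also have "\<dots> = (\<Sum>U\<in>blists k. (1 + a*d) * (rw a 0 False True (replicate k False) U * Pt rs U E))"
    by (rule sum.cong[OF refl]) (simp add: rw_top[of _ k a d False] blists_def)
  also have "\<dots> = (1 + a*d) * (\<Sum>U\<in>blists k. rw a 0 False True (replicate k False) U * Pt rs U E)"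
    by (simp only: sum_distrib_left)
  also have "\<dots> = (1 + a*d) * Pt ((a,0)#rs) (replicate k False) E" by simp
  finally show ?thesis .
qed

lemma rw_snoc: "length S = length T \<Longrightarrow> rw a d h e (S@[s]) (T@[t]) =
   rw a d h False S T * lw a d s False t e + rw a d h True S T * lw a d s True t e"
proof (induction S T arbitrary: h rule: list_induct2)
  case Nil then show ?case by (cases h; cases e) auto
next
  case (Cons x S y T) then show ?case by (simp add: algebra_simps)
qed

lemma rwT0: "rw a 0 True e (u#U) (True#T) = 0"
  by (simp add: lw_def)

lemma rw_allTrue: "length U = Suc k \<Longrightarrow>
   rw a 0 False True U (replicate (Suc k) True) = (if U = replicate k True @ [False] then 1 else 0)"
proof (induction k arbitrary: U)
  case 0
  then obtain u U' where "U = u#U'" "U' = []" by (cases U) auto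
  then show ?case by (cases u) (simp_all add: lw_def)
next
  case (Suc k)
  then obtain u U' where U: "U = u#U'" "length U' = Suc k" by (cases U) auto
  then obtain u' U'' where U': "U' = u'#U''" by (cases U') auto
  show ?case
  proof (cases u)
    case True
    then show ?thesis using Suc.IH[OF U(2)] by (simp add: U lw_def)
  next
    case False
    then show ?thesis using U U' by (simp add: lw_def)
  qed
qed

lemma P_TF: "length S = length E \<Longrightarrow> Pt rs (S@[True]) (E@[False]) = 0"
proof (induction rs arbitrary: S)
  case Nil then show ?case by simp
next
  case (Cons r rs)
  obtain a d where r: "r = (a,d)" by force
  have z: "rw a d False True (S@[True]) (U@[False]) = 0" if "length U = length S" for U
    using that by (simp add: rw_snoc lw_def)
  have "Pt (r#rs) (S@[True]) (E@[False]) =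
     (\<Sum>U\<in>blists (length S). rw a d False True (S@[True]) (U@[True]) * Pt rs (U@[True]) (E@[False])) +
     (\<Sum>U\<in>blists (length S). rw a d False True (S@[True]) (U@[False]) * Pt rs (U@[False]) (E@[False]))"
    by (simp add: r sum_blists_snoc)
  also have "\<dots> = 0" using Cons z by (auto intro!: sum.neutral simp: blists_def)
  finally show ?case .
qed

lemma P_drop_last: "length S = length E \<Longrightarrow> Pt rs (S@[False]) (E@[False]) = Pt rs S E"
proof (induction rs arbitrary: S)
  case Nil then show ?case by simp
next
  case (Cons r rs)
  obtain a d where r: "r = (a,d)" by force
  have z: "rw a d False True (S@[False]) (U@[False]) = rw a d False True S U" if "length U = length S" for U
    using that by (simp add: rw_snoc lw_def)
  have "Pt (r#rs) (S@[False]) (E@[False]) =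
     (\<Sum>U\<in>blists (length S). rw a d False True (S@[False]) (U@[True]) * Pt rs (U@[True]) (E@[False])) +
     (\<Sum>U\<in>blists (length S). rw a d False True (S@[False]) (U@[False]) * Pt rs (U@[False]) (E@[False]))"
    by (simp add: r sum_blists_snoc)
  also have "\<dots> = 0 + (\<Sum>U\<in>blists (length S). rw a d False True S U * Pt rs U E)"
    using Cons z P_TF by (intro arg_cong2[where f="(+)"] sum.neutral ballI sum.cong) (auto simp: blists_def)
  finally show ?case by (simp add: r)
qed

lemma P_single: "length U = length E \<Longrightarrow> Pt [(a,d)] U E = rw a d False True U E"
proof -
  assume l: "length U = length E"
  have "Pt [(a,d)] U E = (\<Sum>V\<in>blists (length U). rw a d False True U V * (if V = E then 1 else 0))" by simp
  also have "\<dots> = (\<Sum>V\<in>blists (length U). if E = V then rw a d False True U V else 0)"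
    by (rule sum.cong) auto
  also have "\<dots> = rw a d False True U E" using l by (subst sum.delta'[OF finite_blists]) (simp add: blists_def)
  finally show ?thesis .
qed

lemma P_peel: "Pt (rs @ [(a,0)]) (replicate (Suc k) False) (replicate (Suc k) True) =
    Pt rs (replicate k False) (replicate k True)"
proof -
  have "Pt (rs @ [(a,0)]) (replicate (Suc k) False) (replicate (Suc k) True) =
     (\<Sum>U\<in>blists (Suc k). Pt rs (replicate (Suc k) False) U * Pt [(a,0)] U (replicate (Suc k) True))"
    unfolding P_comp by simp
  also have "\<dots> = (\<Sum>U\<in>blists (Suc k). if replicate k True @ [False] = U then Pt rs (replicate (Suc k) False) U else 0)"
  proof (rule sum.cong[OF refl])
    fix U assume "U \<in> blists (Suc k)"
    then have l: "length U = Suc k" by (simp add: blists_def)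
    have "Pt [(a,0)] U (replicate (Suc k) True) = rw a 0 False True U (replicate (Suc k) True)"
      using l by (intro P_single) simp
    then show "Pt rs (replicate (Suc k) False) U * Pt [(a,0)] U (replicate (Suc k) True) =
      (if replicate k True @ [False] = U then Pt rs (replicate (Suc k) False) U else 0)"
      using rw_allTrue[OF l, of a] by (auto simp del: replicate_Suc)
  qed
  also have "\<dots> = Pt rs (replicate (Suc k) False) (replicate k True @ [False])"
    by (subst sum.delta'[OF finite_blists]) (simp add: blists_def)
  also have "\<dots> = Pt rs (replicate k False) (replicate k True)"
    using P_drop_last[of "replicate k False" "replicate k True" rs] by (simp add: replicate_append_same)
  finally show ?thesis .
qed


fun Q :: "(int \<times> int) list \<Rightarrow> int" where
  "Q [] = 1"
| "Q ((a,d)#rs) = (1 + a*d) * prod_list (map (\<lambda>x. 1 + a * snd x) rs) * Q rs"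

lemma Q_snoc: "Q (rs @ [(a,0)]) = Q rs"
proof (induction rs)
  case Nil then show ?case by simp
next
  case (Cons x rs) then show ?case by (cases x) simp
qed

lemma Q_top: "Q ((a,d)#rs) = (1 + a*d) * Q ((a,0)#rs)"
  by simp

lemma Q_swap_mid: "(1 + a'*d) * Q (pre @ (a,d)#(a',d')#rs) = (1 + a*d') * Q (pre @ (a',d')#(a,d)#rs)"
proof (induction pre)
  case Nil then show ?case by (simp add: algebra_simps)
next
  case (Cons x pre)
  obtain b e where x: "x = (b,e)" by force
  let ?L1 = "pre @ (a,d)#(a',d')#rs" and ?L2 = "pre @ (a',d')#(a,d)#rs"
  let ?p = "\<lambda>L. prod_list (map (\<lambda>x. 1 + b * snd x) L)"
  have p: "?p ?L1 = ?p ?L2" by (simp add: ac_simps)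
  have "(1 + a'*d) * Q (x # ?L1) = (1 + b*e) * ?p ?L1 * ((1 + a'*d) * Q ?L1)"
    by (simp add: x ac_simps)
  also have "\<dots> = (1 + b*e) * ?p ?L2 * ((1 + a*d') * Q ?L2)"
    by (simp only: Cons.IH p)
  also have "\<dots> = (1 + a*d') * Q (x # ?L2)"
    by (simp add: x ac_simps)
  finally show ?case by simp
qed

definition nonneg :: "(int \<times> int) list \<Rightarrow> bool" where
  "nonneg rs = (\<forall>x\<in>set rs. fst x \<ge> 0 \<and> snd x \<ge> 0)"

definition good :: "(int \<times> int) list \<Rightarrow> bool" where
  "good rs = (Pt rs (replicate (length rs) False) (replicate (length rs) True) = Q rs)"

lemma cancel_lemma: "(c1::int) * p1 = c2 * p2 \<Longrightarrow> c1 * q1 = c2 * q2 \<Longrightarrow> c1 \<noteq> 0 \<Longrightarrow> c2 \<noteq> 0 \<Longrightarrow> (p1 = q1) = (p2 = q2)"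
  by (metis mult_left_cancel)

lemma good_swap: "a \<ge> 0 \<Longrightarrow> d \<ge> 0 \<Longrightarrow> a' \<ge> 0 \<Longrightarrow> d' \<ge> 0 \<Longrightarrow>
  good (pre @ (a,d)#(a',d')#rs) = good (pre @ (a',d')#(a,d)#rs)"
  unfolding good_def
  apply (rule cancel_lemma[of "1 + a'*d" _ "1 + a*d'"])
  using P_swap_mid[of a' d pre a d' rs] apply simp
  using Q_swap_mid[of a' d pre a d' rs] apply simp
  by (simp_all add: add_nonneg_eq_0_iff)

lemma good_move: "nonneg (pre @ x # post) \<Longrightarrow> good (pre @ x # post) = good (pre @ post @ [x])"
proof (induction post arbitrary: pre)
  case Nil then show ?case by simp
next
  case (Cons y post)
  obtain a d where x: "x = (a,d)" by force
  obtain a' d' where y: "y = (a',d')" by force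
  have nn: "a \<ge> 0" "d \<ge> 0" "a' \<ge> 0" "d' \<ge> 0" using Cons.prems by (auto simp: nonneg_def x y)
  have "good (pre @ x # y # post) = good (pre @ y # x # post)"
    unfolding x y by (rule good_swap[OF nn])
  also have "\<dots> = good ((pre @ [y]) @ x # post)" by simp
  also have "\<dots> = good ((pre @ [y]) @ post @ [x])"
    using Cons.prems by (intro Cons.IH) (auto simp: nonneg_def)
  finally show ?case by simp
qed

definition r01 :: "(int \<times> int) list \<Rightarrow> bool" where
  "r01 rs = (\<forall>x\<in>set rs. (fst x = 0 \<or> fst x = 1) \<and> (snd x = 0 \<or> snd x = 1))"

lemma r01_nonneg: "r01 rs \<Longrightarrow> nonneg rs"
  by (auto simp: r01_def nonneg_def)

theorem P_Q: "r01 rs \<Longrightarrow> good rs"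
proof (induction "length rs" arbitrary: rs)
  case 0 then show ?case by (simp add: good_def)
next
  case (Suc n)
  have case1: "good rs" if l: "length rs = Suc n" and r: "r01 rs" and z: "\<exists>x\<in>set rs. snd x = 0" for rs
  proof -
    obtain x where xin: "x \<in> set rs" and x0: "snd x = 0" using z by blast
    obtain pre post where rs: "rs = pre @ x # post" using xin by (meson split_list)
    obtain a where x: "x = (a,0)" using x0 by (cases x) auto
    have "good rs = good (pre @ post @ [x])" unfolding rs
      using r r01_nonneg by (intro good_move) (simp add: rs)
    also have "\<dots> = good (pre @ post)"
    proof -
      have len: "length (pre @ post) = n" using l by (simp add: rs)
      have "Pt ((pre @ post) @ [(a,0)]) (replicate (Suc n) False) (replicate (Suc n) True) =
            Pt (pre @ post) (replicate n False) (replicate n True)" by (rule P_peel)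
      then show ?thesis using len by (simp add: good_def x Q_snoc[of "pre @ post" a, simplified])
    qed
    also have "\<dots>" using Suc.hyps(1)[of "pre @ post"] l r by (auto simp: rs r01_def)
    finally show ?thesis .
  qed
  show ?case
  proof (cases "\<exists>x\<in>set rs. snd x = 0")
    case True then show ?thesis using case1[of rs] Suc.hyps(2) Suc.prems by simp
  next
    case False
    obtain x rest where rs: "rs = x # rest" using Suc.hyps(2) by (cases rs) auto
    obtain a d where x: "x = (a,d)" by force
    have "good ((a,0)#rest)" using Suc.hyps(2) Suc.prems by (intro case1) (auto simp: rs x r01_def)
    then show ?thesis unfolding good_def rs x
      by (simp only: P_top[of a d rest] Q_top[of a d rest] length_Cons)
  qed
qed



definition deg :: "(nat\<times>nat) set \<Rightarrow> nat\<times>nat \<Rightarrow> nat" where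
  "deg S v = card {e\<in>S. v \<in> AD_ends e}"

definition valid :: "nat \<Rightarrow> (nat\<times>nat) set \<Rightarrow> (nat\<times>nat) set \<Rightarrow> (nat\<times>nat) set \<Rightarrow> bool" where
  "valid n E C S \<longleftrightarrow> S \<subseteq> E \<and> (\<forall>v. deg S v = (if v \<in> AD_verts n - C then 1 else 0))"

definition Cnt :: "nat \<Rightarrow> (nat \<Rightarrow> nat \<Rightarrow> int) \<Rightarrow> (nat\<times>nat) set \<Rightarrow> (nat\<times>nat) set \<Rightarrow> int" where
  "Cnt n w E C = (\<Sum>S\<in>{S. valid n E C S}. \<Prod>e\<in>S. w (fst e) (snd e))"

lemma valid_deg: "valid n E C S \<Longrightarrow> deg S v = (if v \<in> AD_verts n - C then 1 else 0)"
  unfolding valid_def by blast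

lemma finite_valid: "finite E \<Longrightarrow> finite {S. valid n E C S}"
  by (rule finite_subset[of _ "Pow E"]) (auto simp: valid_def)

lemma deg_insert: "finite S \<Longrightarrow> e \<notin> S \<Longrightarrow> deg (insert e S) v = deg S v + (if v \<in> AD_ends e then 1 else 0)"
proof -
  assume f: "finite S" and e: "e \<notin> S"
  show ?thesis
  proof (cases "v \<in> AD_ends e")
    case True
    then have "{e'\<in>insert e S. v \<in> AD_ends e'} = insert e {e'\<in>S. v \<in> AD_ends e'}" by auto
    then show ?thesis using f e True by (simp add: deg_def)
  next
    case False
    then have "{e'\<in>insert e S. v \<in> AD_ends e'} = {e'\<in>S. v \<in> AD_ends e'}" by auto
    then show ?thesis using False by (simp add: deg_def)
  qed
qed

lemma Cnt_cong: "AD_verts n - C = AD_verts n - C' \<Longrightarrow> Cnt n w E C = Cnt n w E C'"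
  by (simp add: Cnt_def valid_def)

lemma Cnt_empty: "Cnt n w {} C = (if AD_verts n \<subseteq> C then 1 else 0)"
proof -
  have "{S. valid n {} C S} = (if AD_verts n \<subseteq> C then {{}} else {})"
    by (auto simp: valid_def deg_def split: if_splits)
  then show ?thesis by (simp add: Cnt_def)
qed

lemma Cnt_vanish: "v \<in> AD_verts n \<Longrightarrow> v \<notin> C \<Longrightarrow> \<forall>e\<in>E. v \<notin> AD_ends e \<Longrightarrow> Cnt n w E C = 0"
proof -
  assume v: "v \<in> AD_verts n" "v \<notin> C" and u: "\<forall>e\<in>E. v \<notin> AD_ends e"
  have "{S. valid n E C S} = {}"
  proof (rule ccontr)
    assume "{S. valid n E C S} \<noteq> {}"
    then obtain S where S: "valid n E C S" by blast
    then have "deg S v = 1" using v valid_deg[OF S, of v] by simp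
    moreover have "{e\<in>S. v \<in> AD_ends e} = {}" using S u by (auto simp: valid_def)
    ultimately show False by (simp add: deg_def)
  qed
  then show ?thesis by (simp add: Cnt_def)
qed

lemma Cnt_insert:
  assumes f: "finite E" and e: "e \<notin> E"
  shows "Cnt n w (insert e E) C = Cnt n w E C +
    (if AD_ends e \<inter> C = {} \<and> AD_ends e \<subseteq> AD_verts n then w (fst e) (snd e) * Cnt n w E (C \<union> AD_ends e) else 0)"
proof -
  let ?A = "{S. valid n (insert e E) C S}"
  let ?A1 = "{S. valid n E C S}"
  let ?A2 = "{S. valid n (insert e E) C S \<and> e \<in> S}"
  let ?cond = "AD_ends e \<inter> C = {} \<and> AD_ends e \<subseteq> AD_verts n"
  let ?B = "{S. valid n E (C \<union> AD_ends e) S}"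
  let ?f = "\<lambda>S. \<Prod>e\<in>S. w (fst e) (snd e)"
  have A: "?A = ?A1 \<union> ?A2" using e by (auto simp: valid_def)
  have disj: "?A1 \<inter> ?A2 = {}" using e by (auto simp: valid_def)
  have fA1: "finite ?A1" by (rule finite_valid[OF f])
  have fA2: "finite ?A2" by (rule finite_subset[OF _ finite_valid[of "insert e E" n C]]) (use f in auto)
  have A2: "?A2 = (if ?cond then insert e ` ?B else {})"
  proof (cases ?cond)
    case True
    have "?A2 = insert e ` ?B"
    proof
      show "?A2 \<subseteq> insert e ` ?B"
      proof
        fix S assume S: "S \<in> ?A2"
        let ?S' = "S - {e}"
        have sub: "?S' \<subseteq> E" using S by (auto simp: valid_def)
        have fS': "finite ?S'" using sub f by (rule finite_subset)
        have SS: "S = insert e ?S'" using S by auto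
        have dg: "deg S v = deg ?S' v + (if v \<in> AD_ends e then 1 else 0)" for v
          using deg_insert[OF fS', of e v] SS by simp
        have "valid n E (C \<union> AD_ends e) ?S'"
          unfolding valid_def
        proof (intro conjI allI sub)
          fix v
          have "deg S v = (if v \<in> AD_verts n - C then 1 else 0)" using S valid_deg[of n "insert e E" C S v] by simp
          then show "deg ?S' v = (if v \<in> AD_verts n - (C \<union> AD_ends e) then 1 else 0)"
            using dg[of v] by (auto split: if_splits)
        qed
        then show "S \<in> insert e ` ?B" using SS by blast
      qed
    next
      show "insert e ` ?B \<subseteq> ?A2"
      proof
        fix S assume "S \<in> insert e ` ?B"
        then obtain S' where S': "valid n E (C \<union> AD_ends e) S'" and SS: "S = insert e S'" by blast
        have sub: "S' \<subseteq> E" using S' by (simp add: valid_def)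
        have fS': "finite S'" using sub f by (rule finite_subset)
        have eS': "e \<notin> S'" using sub e by auto
        have "valid n (insert e E) C S"
          unfolding valid_def
        proof (intro conjI allI)
          show "S \<subseteq> insert e E" using sub SS by auto
          fix v
          have "deg S' v = (if v \<in> AD_verts n - (C \<union> AD_ends e) then 1 else 0)" using S' by (rule valid_deg)
          then show "deg S v = (if v \<in> AD_verts n - C then 1 else 0)"
            using deg_insert[OF fS' eS', of v] SS True by (auto split: if_splits)
        qed
        then show "S \<in> ?A2" using SS by simp
      qed
    qed
    then show ?thesis using True by simp
  next
    case False
    have A2e: "?A2 = {}"
    proof (rule ccontr)
      assume "?A2 \<noteq> {}"
      then obtain S where S: "S \<in> ?A2" by blast
      let ?S' = "S - {e}"
      have sub: "?S' \<subseteq> E" using S by (auto simp: valid_def)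
      have fS': "finite ?S'" using sub f by (rule finite_subset)
      have SS: "S = insert e ?S'" using S by auto
      from False obtain v where v: "v \<in> AD_ends e" "v \<in> C \<or> v \<notin> AD_verts n" by blast
      have "deg S v = deg ?S' v + 1" using deg_insert[OF fS', of e v] SS v(1) by simp
      moreover have "deg S v = (if v \<in> AD_verts n - C then 1 else 0)" using S valid_deg[of n "insert e E" C S v] by simp
      ultimately show False using v(2) by auto
    qed
    show ?thesis unfolding if_not_P[OF False] by (rule A2e)
  qed
  have "Cnt n w (insert e E) C = sum ?f ?A1 + sum ?f ?A2"
    unfolding Cnt_def A by (rule sum.union_disjoint[OF fA1 fA2 disj])
  also have "sum ?f ?A2 = (if ?cond then w (fst e) (snd e) * Cnt n w E (C \<union> AD_ends e) else 0)"
  proof (cases ?cond)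
    case True
    have inj: "inj_on (insert e) ?B"
    proof (rule inj_onI)
      fix X Y assume "X \<in> ?B" "Y \<in> ?B" "insert e X = insert e Y"
      moreover have "e \<notin> X" "e \<notin> Y" using \<open>X \<in> ?B\<close> \<open>Y \<in> ?B\<close> e by (auto simp: valid_def)
      ultimately show "X = Y" by (metis insert_ident)
    qed
    have "sum ?f ?A2 = sum (?f \<circ> insert e) ?B" using True A2 by (simp add: sum.reindex[OF inj])
    also have "\<dots> = (\<Sum>S\<in>?B. w (fst e) (snd e) * ?f S)"
    proof (rule sum.cong[OF refl])
      fix S assume "S \<in> ?B"
      then have "finite S" "e \<notin> S" using f e by (auto simp: valid_def intro: finite_subset)
      then show "(?f \<circ> insert e) S = w (fst e) (snd e) * ?f S" by simp
    qed
    also have "\<dots> = w (fst e) (snd e) * Cnt n w E (C \<union> AD_ends e)"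
      by (simp add: Cnt_def sum_distrib_left)
    finally show ?thesis using True by simp
  next
    case False
    have "?A2 = {}" using A2 by (simp only: if_not_P[OF False])
    then show ?thesis by (simp only: if_not_P[OF False] sum.empty)
  qed
  finally show ?thesis by (simp add: Cnt_def)
qed


lemma cell:
  fixes pWN pNE pWS pSE W N Ev Sv :: "nat\<times>nat"
  assumes ends: "AD_ends pWN = {W,N}" "AD_ends pNE = {N,Ev}" "AD_ends pWS = {W,Sv}" "AD_ends pSE = {Sv,Ev}"
    and dist: "W\<noteq>N" "W\<noteq>Ev" "W\<noteq>Sv" "N\<noteq>Ev" "N\<noteq>Sv" "Ev\<noteq>Sv"
    and notin: "pWN \<notin> insert pNE (insert pWS (insert pSE E'))" "pNE \<notin> insert pWS (insert pSE E')"
      "pWS \<notin> insert pSE E'" "pSE \<notin> E'"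
    and fin: "finite E'"
    and verts: "N \<in> AD_verts n" "W \<in> AD_verts n" "Ev \<in> AD_verts n" "Sv \<in> AD_verts n"
    and untouched: "\<forall>e\<in>E'. N \<notin> AD_ends e \<and> W \<notin> AD_ends e"
    and free: "Ev \<notin> C" "Sv \<notin> C"
    and w1: "w (fst pNE) (snd pNE) = 1" "w (fst pWS) (snd pWS) = 1"
  shows "Cnt n w (insert pWN (insert pNE (insert pWS (insert pSE E')))) C =
   (\<Sum>t\<in>UNIV. \<Sum>h'\<in>UNIV. lw (w (fst pWN) (snd pWN)) (w (fst pSE) (snd pSE)) (N \<in> C) (W \<in> C) t h' *
       Cnt n w E' (C \<union> {N,W} \<union> (if h' then {Ev} else {}) \<union> (if t then {Sv} else {})))"
proof -
  have vN: "Cnt n w E' X = 0" if "N \<notin> X" for X using Cnt_vanish[OF verts(1) that] untouched by blast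
  have vW: "Cnt n w E' X = 0" if "W \<notin> X" for X using Cnt_vanish[OF verts(2) that] untouched by blast
  note dist' = dist dist[symmetric]
  show ?thesis
  proof (cases "N \<in> C"; cases "W \<in> C")
    assume "N \<in> C" "W \<in> C"
    then show ?thesis
      using notin fin verts free
      by (simp add: Cnt_insert ends dist' w1 vN vW lw_def UNIV_bool) (simp_all add: vN vW insert_commute insert_absorb dist' algebra_simps)
  next
    assume "N \<in> C" "W \<notin> C"
    then show ?thesis
      using notin fin verts free
      by (simp add: Cnt_insert ends dist' w1 vN vW lw_def UNIV_bool) (simp_all add: vN vW insert_commute insert_absorb dist' algebra_simps)
  next
    assume "N \<notin> C" "W \<in> C"
    then show ?thesis
      using notin fin verts free
      by (simp add: Cnt_insert ends dist' w1 vN vW lw_def UNIV_bool) (simp_all add: vN vW insert_commute insert_absorb dist' algebra_simps)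
  next
    assume "N \<notin> C" "W \<notin> C"
    then show ?thesis
      using notin fin verts free
      by (simp add: Cnt_insert ends dist' w1 vN vW lw_def UNIV_bool) (simp_all add: vN vW insert_commute insert_absorb dist' algebra_simps)
  qed
qed


definition rowp :: "nat\<times>nat \<Rightarrow> nat" where "rowp p = (fst p + 1) div 2"
definition colp :: "nat\<times>nat \<Rightarrow> nat" where "colp p = (snd p + 1) div 2"

definition Ecut :: "nat \<Rightarrow> nat \<Rightarrow> nat \<Rightarrow> (nat\<times>nat) set" where
  "Ecut n i j = {p \<in> AD_pos n. i < rowp p \<or> (rowp p = i \<and> j < colp p)}"

definition Cov :: "nat \<Rightarrow> nat \<Rightarrow> bool list \<Rightarrow> bool \<Rightarrow> bool list \<Rightarrow> (nat\<times>nat) set" where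
  "Cov i j S h Tp = {(x,y). y + 1 < 2*i \<or> (y + 1 = 2*i \<and> even x \<and> (x \<le> 2*j \<or> S ! (x div 2 - 1)))
    \<or> (y = 2*i \<and> ((odd x \<and> x < 2*j+1) \<or> (x = 2*j+1 \<and> h)))
    \<or> (y = 2*i+1 \<and> even x \<and> 0 < x \<and> x \<le> 2*j \<and> Tp ! (x div 2 - 1))}"

lemma ends_cell:
  assumes "1 \<le> i"
  shows "AD_ends (2*i-1, 2*j+1) = {(2*j+1, 2*i), (2*j+2, 2*i-1)}"
    "AD_ends (2*i-1, 2*j+2) = {(2*j+2, 2*i-1), (2*j+3, 2*i)}"
    "AD_ends (2*i, 2*j+1) = {(2*j+1, 2*i), (2*j+2, 2*i+1)}"
    "AD_ends (2*i, 2*j+2) = {(2*j+2, 2*i+1), (2*j+3, 2*i)}"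
proof -
  have a: "(2*i-1+1) div 2 = i" "(2*i+1) div 2 = i" "(2*j+1+1) div 2 = Suc j" "(2*j+2+1) div 2 = Suc j"
    using assms by auto
  have b: "odd (2*i - 1)" using assms by (simp add: odd_numeral)
  show "AD_ends (2*i-1, 2*j+1) = {(2*j+1, 2*i), (2*j+2, 2*i-1)}"
    using a b by (simp add: AD_ends_def Let_def numeral_3_eq_3)
  show "AD_ends (2*i-1, 2*j+2) = {(2*j+2, 2*i-1), (2*j+3, 2*i)}"
    using a b by (simp add: AD_ends_def Let_def numeral_3_eq_3)
  show "AD_ends (2*i, 2*j+1) = {(2*j+1, 2*i), (2*j+2, 2*i+1)}"
    using a b by (simp add: AD_ends_def Let_def numeral_3_eq_3)
  show "AD_ends (2*i, 2*j+2) = {(2*j+2, 2*i+1), (2*j+3, 2*i)}"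
    using a b by (simp add: AD_ends_def Let_def numeral_3_eq_3)
qed

lemma ends_sub: "AD_ends p \<subseteq> {(2*colp p - 1, 2*rowp p), (2*colp p + 1, 2*rowp p), (2*colp p, 2*rowp p - 1), (2*colp p, 2*rowp p + 1)}"
  by (auto simp: AD_ends_def Let_def rowp_def colp_def)

lemma pos_bounds: "p \<in> AD_pos n \<Longrightarrow> 1 \<le> rowp p \<and> rowp p \<le> n \<and> 1 \<le> colp p \<and> colp p \<le> n"
  by (auto simp: AD_pos_def rowp_def colp_def)

lemma finite_Ecut: "finite (Ecut n i j)"
  by (rule finite_subset[of _ "AD_pos n"]) (auto simp: Ecut_def AD_pos_def)

lemma Ecut_split:
  assumes "1 \<le> i" "i \<le> n" "j < n"
  shows "Ecut n i j = insert (2*i-1, 2*j+1) (insert (2*i-1, 2*j+2) (insert (2*i, 2*j+1) (insert (2*i, 2*j+2) (Ecut n i (Suc j)))))"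
proof (rule set_eqI)
  fix p :: "nat\<times>nat"
  obtain r c where p: "p = (r,c)" by force
  show "p \<in> Ecut n i j \<longleftrightarrow> p \<in> insert (2*i-1, 2*j+1) (insert (2*i-1, 2*j+2) (insert (2*i, 2*j+1) (insert (2*i, 2*j+2) (Ecut n i (Suc j)))))"
    using assms unfolding p Ecut_def AD_pos_def rowp_def colp_def by auto
qed

lemma Ecut_end: "Ecut n i n = Ecut n (Suc i) 0"
  by (auto simp: Ecut_def dest: pos_bounds)

lemma Ecut_first: "Ecut n 1 0 = AD_pos n"
  by (auto simp: Ecut_def dest: pos_bounds)

lemma Ecut_last: "Ecut n (Suc n) 0 = {}"
  by (auto simp: Ecut_def dest: pos_bounds)


lemma verts_char: "v \<in> AD_verts n \<Longrightarrow>
   (even (snd v) \<and> odd (fst v) \<and> 2 \<le> snd v \<and> snd v \<le> 2*n \<and> fst v \<le> 2*n+1) \<or>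
   (odd (snd v) \<and> even (fst v) \<and> 2 \<le> fst v \<and> fst v \<le> 2*n \<and> snd v \<le> 2*n+1)"
proof -
  assume "v \<in> AD_verts n"
  then obtain p where p: "p \<in> AD_pos n" "v \<in> AD_ends p" by (auto simp: AD_verts_def)
  have b: "1 \<le> rowp p" "rowp p \<le> n" "1 \<le> colp p" "colp p \<le> n" using pos_bounds[OF p(1)] by auto
  have "v \<in> {(2*colp p - 1, 2*rowp p), (2*colp p + 1, 2*rowp p), (2*colp p, 2*rowp p - 1), (2*colp p, 2*rowp p + 1)}"
    using ends_sub p(2) by blast
  then show ?thesis using b by auto
qed

lemma in_verts: "p \<in> AD_pos n \<Longrightarrow> v \<in> AD_ends p \<Longrightarrow> v \<in> AD_verts n"
  by (auto simp: AD_verts_def)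

lemma cov_cell:
  assumes "1 \<le> i"
  shows "(2*j+2, 2*i-1) \<in> Cov i j S h Tp \<longleftrightarrow> S ! j"
    "(2*j+1, 2*i) \<in> Cov i j S h Tp \<longleftrightarrow> h"
    "(2*j+3, 2*i) \<notin> Cov i j S h Tp"
    "(2*j+2, 2*i+1) \<notin> Cov i j S h Tp"
  using assms by (auto simp: Cov_def)

lemma cov_step:
  assumes i: "1 \<le> i" and l: "length Tp = j"
  shows "Cov i j S h Tp \<union> {(2*j+2, 2*i-1), (2*j+1, 2*i)} \<union> (if h' then {(2*j+3, 2*i)} else {})
      \<union> (if t then {(2*j+2, 2*i+1)} else {}) = Cov i (Suc j) S h' (Tp @ [t])"
proof (rule set_eqI)
  fix v :: "nat \<times> nat"
  obtain x y where v: "v = (x,y)" by force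
  have c: "y + 1 < 2*i \<or> y + 1 = 2*i \<or> y = 2*i \<or> y = 2*i+1 \<or> y > 2*i+1" by auto
  have m: "(x,y) \<in> Cov i j S h Tp \<union> {(2*j+2, 2*i-1), (2*j+1, 2*i)} \<union> (if h' then {(2*j+3, 2*i)} else {})
      \<union> (if t then {(2*j+2, 2*i+1)} else {}) \<longleftrightarrow>
      (x,y) \<in> Cov i j S h Tp \<or> (x = 2*j+2 \<and> y = 2*i-1) \<or> (x = 2*j+1 \<and> y = 2*i) \<or> (h' \<and> x = 2*j+3 \<and> y = 2*i)
      \<or> (t \<and> x = 2*j+2 \<and> y = 2*i+1)" by auto
  have "(x,y) \<in> Cov i j S h Tp \<or> (x = 2*j+2 \<and> y = 2*i-1) \<or> (x = 2*j+1 \<and> y = 2*i) \<or> (h' \<and> x = 2*j+3 \<and> y = 2*i)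
      \<or> (t \<and> x = 2*j+2 \<and> y = 2*i+1) \<longleftrightarrow> (x,y) \<in> Cov i (Suc j) S h' (Tp @ [t])"
    using c
  proof (elim disjE)
    assume y: "y + 1 < 2*i"
    then show ?thesis by (simp add: Cov_def)
  next
    assume y: "y + 1 = 2*i"
    have a: "even x \<and> x \<le> 2*j+2 \<longleftrightarrow> (even x \<and> x \<le> 2*j) \<or> x = 2*j+2" by presburger
    have "y = 2*i - 1" using y by simp
    then show ?thesis using y a by (auto simp: Cov_def)
  next
    assume y: "y = 2*i"
    have a: "odd x \<and> x < 2*j+3 \<longleftrightarrow> (odd x \<and> x < 2*j+1) \<or> x = 2*j+1" by presburger
    have b: "x = 2*j+3 \<longrightarrow> odd x" by presburger
    show ?thesis using y i a b by (auto simp: Cov_def)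
  next
    assume y: "y = 2*i+1"
    have a: "(even x \<and> 0 < x \<and> x \<le> 2*j+2 \<and> (Tp@[t]) ! (x div 2 - 1)) \<longleftrightarrow>
        (even x \<and> 0 < x \<and> x \<le> 2*j \<and> Tp ! (x div 2 - 1)) \<or> (x = 2*j+2 \<and> t)"
    proof (cases "x \<le> 2*j")
      case True
      then have "x div 2 - 1 < j \<or> x = 0" by auto
      then show ?thesis using True l by (auto simp: nth_append)
    next
      case False
      then have "x = 2*j+1 \<or> x = 2*j+2 \<or> x > 2*j+2" by auto
      then show ?thesis using l by (auto simp: nth_append)
    qed
    show ?thesis using y i a by (auto simp: Cov_def)
  next
    assume y: "y > 2*i+1"
    then show ?thesis by (auto simp: Cov_def)
  qed
  then show "v \<in> Cov i j S h Tp \<union> {(2*j+2, 2*i-1), (2*j+1, 2*i)} \<union> (if h' then {(2*j+3, 2*i)} else {})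
      \<union> (if t then {(2*j+2, 2*i+1)} else {}) \<longleftrightarrow> v \<in> Cov i (Suc j) S h' (Tp @ [t])"
    using m v by simp
qed


lemma cov_end_eq:
  assumes i: "1 \<le> i"
  shows "AD_verts n - Cov i n S True Tp = AD_verts n - Cov (Suc i) 0 Tp False []"
proof -
  have "v \<in> Cov i n S True Tp \<longleftrightarrow> v \<in> Cov (Suc i) 0 Tp False []" if v: "v \<in> AD_verts n" for v
  proof -
    obtain x y where xy: "v = (x,y)" by force
    from verts_char[OF v] xy have
      "(even y \<and> odd x \<and> 2 \<le> y \<and> y \<le> 2*n \<and> x \<le> 2*n+1) \<or> (odd y \<and> even x \<and> 2 \<le> x \<and> x \<le> 2*n \<and> y \<le> 2*n+1)"
      by simp
    then show ?thesis
    proof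
      assume H: "even y \<and> odd x \<and> 2 \<le> y \<and> y \<le> 2*n \<and> x \<le> 2*n+1"
      have a: "y + 1 \<noteq> 2*i" "y + 1 \<noteq> 2*(Suc i)" using H by presburger+
      have b: "y + 1 < 2*i \<or> y = 2*i \<longleftrightarrow> y + 1 < 2 * Suc i" using H by presburger
      have c: "x < 2*n+1 \<or> x = 2*n+1" using H by auto
      show ?thesis using a b c H by (auto simp: xy Cov_def)
    next
      assume V: "odd y \<and> even x \<and> 2 \<le> x \<and> x \<le> 2*n \<and> y \<le> 2*n+1"
      have a: "y \<noteq> 2*i" "y \<noteq> 2*Suc i" using V by presburger+
      have b: "y + 1 < 2*i \<or> y + 1 = 2*i \<longleftrightarrow> y + 1 < 2 * Suc i" using V by presburger
      show ?thesis using a b V by (auto simp: xy Cov_def)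
    qed
  qed
  then show ?thesis by blast
qed

lemma cov_end_vanish: "1 \<le> i \<Longrightarrow> (2*n+1, 2*i) \<notin> Cov i n S False Tp"
  by (auto simp: Cov_def)

lemma rowp_ge: "p \<in> AD_pos n \<Longrightarrow> v \<in> AD_ends p \<Longrightarrow> snd v = 2*rowp p \<or> snd v + 1 = 2*rowp p \<or> snd v = 2*rowp p + 1"
  using ends_sub[of p] pos_bounds[of p n] by auto

lemma row_inner:
  assumes wts: "\<And>j. 1 \<le> j \<Longrightarrow> j \<le> n \<Longrightarrow> w (2*i-1) (2*j-1) = a \<and> w (2*i-1) (2*j) = 1 \<and> w (2*i) (2*j-1) = 1 \<and> w (2*i) (2*j) = d"
    and i: "1 \<le> i" "i \<le> n" and lS: "length S = n"
  shows "j \<le> n \<Longrightarrow> length Tp = j \<Longrightarrow> Cnt n w (Ecut n i j) (Cov i j S h Tp) =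
     (\<Sum>Tr\<in>blists (n-j). rw a d h True (drop j S) Tr * Cnt n w (Ecut n (Suc i) 0) (Cov (Suc i) 0 (Tp @ Tr) False []))"
proof (induction "n - j" arbitrary: j h Tp)
  case 0
  then have j: "j = n" by simp
  have b0: "blists 0 = {[]}" by (auto simp: blists_def)
  have R: "(\<Sum>Tr\<in>blists (n-j). rw a d h True (drop j S) Tr * Cnt n w (Ecut n (Suc i) 0) (Cov (Suc i) 0 (Tp @ Tr) False [])) =
     (if h then 1 else 0) * Cnt n w (Ecut n (Suc i) 0) (Cov (Suc i) 0 Tp False [])"
    using j lS b0 by simp
  show ?case
  proof (cases h)
    case True
    have "Cnt n w (Ecut n i j) (Cov i j S h Tp) = Cnt n w (Ecut n (Suc i) 0) (Cov i n S True Tp)"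
      using j True Ecut_end by simp
    also have "\<dots> = Cnt n w (Ecut n (Suc i) 0) (Cov (Suc i) 0 Tp False [])"
      by (rule Cnt_cong) (rule cov_end_eq[OF i(1)])
    finally show ?thesis using R True by simp
  next
    case False
    have n1: "1 \<le> n" using i by simp
    have pos: "(2*i-1, 2*(n-1)+2) \<in> AD_pos n" using i n1 by (auto simp: AD_pos_def)
    have m1: "(2*(n-1)+3, 2*i) \<in> AD_ends (2*i-1, 2*(n-1)+2)" using ends_cell(2)[OF i(1), of "n-1"] by blast
    have m2: "2*(n-1)+3 = 2*n+1" using n1 by simp
    have "(2*n+1, 2*i) \<in> AD_ends (2*i-1, 2*(n-1)+2)" using m1 unfolding m2 .
    then have vv: "(2*n+1, 2*i) \<in> AD_verts n" using in_verts[OF pos] by blast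
    have un: "\<forall>e\<in>Ecut n (Suc i) 0. (2*n+1, 2*i) \<notin> AD_ends e"
    proof
      fix e assume e: "e \<in> Ecut n (Suc i) 0"
      then have "e \<in> AD_pos n" "i < rowp e" by (auto simp: Ecut_def)
      then show "(2*n+1, 2*i) \<notin> AD_ends e" using rowp_ge[of e n "(2*n+1, 2*i)"] by auto
    qed
    have "Cnt n w (Ecut n i j) (Cov i j S h Tp) = 0"
      using Cnt_vanish[OF vv _ un] cov_end_vanish[OF i(1)] j False Ecut_end by simp
    then show ?thesis using R False by simp
  qed
next
  case (Suc k)
  then have jn: "j < n" by simp
  let ?C = "Cov i j S h Tp"
  let ?E' = "Ecut n i (Suc j)"
  let ?X = "\<lambda>Tr. Cnt n w (Ecut n (Suc i) 0) (Cov (Suc i) 0 Tr False [])"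
  have posi: "(2*i-1, 2*j+1) \<in> AD_pos n" "(2*i-1, 2*j+2) \<in> AD_pos n" "(2*i, 2*j+1) \<in> AD_pos n" "(2*i, 2*j+2) \<in> AD_pos n"
    using i jn by (auto simp: AD_pos_def)
  note ec = ends_cell[OF i(1), of j]
  have vN: "(2*j+2, 2*i-1) \<in> AD_verts n" using in_verts[OF posi(1)] ec by auto
  have vW: "(2*j+1, 2*i) \<in> AD_verts n" using in_verts[OF posi(1)] ec by auto
  have vE: "(2*j+3, 2*i) \<in> AD_verts n" using in_verts[OF posi(2)] ec by auto
  have vS: "(2*j+2, 2*i+1) \<in> AD_verts n" using in_verts[OF posi(3)] ec by auto
  have un: "\<forall>e\<in>?E'. (2*j+2, 2*i-1) \<notin> AD_ends e \<and> (2*j+1, 2*i) \<notin> AD_ends e"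
  proof
    fix e assume e: "e \<in> ?E'"
    then have ep: "e \<in> AD_pos n" and er: "i < rowp e \<or> (rowp e = i \<and> Suc j < colp e)" by (auto simp: Ecut_def)
    have "AD_ends e \<subseteq> {(2*colp e - 1, 2*rowp e), (2*colp e + 1, 2*rowp e), (2*colp e, 2*rowp e - 1), (2*colp e, 2*rowp e + 1)}"
      by (rule ends_sub)
    moreover have "1 \<le> rowp e" "1 \<le> colp e" using pos_bounds[OF ep] by auto
    ultimately show "(2*j+2, 2*i-1) \<notin> AD_ends e \<and> (2*j+1, 2*i) \<notin> AD_ends e" using er i by auto
  qed
  have notin: "(2*i-1, 2*j+1) \<notin> insert (2*i-1, 2*j+2) (insert (2*i, 2*j+1) (insert (2*i, 2*j+2) ?E'))"
     "(2*i-1, 2*j+2) \<notin> insert (2*i, 2*j+1) (insert (2*i, 2*j+2) ?E')"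
     "(2*i, 2*j+1) \<notin> insert (2*i, 2*j+2) ?E'" "(2*i, 2*j+2) \<notin> ?E'"
    using i by (auto simp: Ecut_def rowp_def colp_def)
  have w1: "w (2*i-1) (2*j+1) = a" "w (2*i-1) (2*j+2) = 1" "w (2*i) (2*j+1) = 1" "w (2*i) (2*j+2) = d"
    using wts[of "Suc j"] jn by auto
  have cellapp: "Cnt n w (Ecut n i j) ?C = (\<Sum>t\<in>UNIV. \<Sum>h'\<in>UNIV. lw a d (S!j) h t h' *
        Cnt n w ?E' (Cov i (Suc j) S h' (Tp@[t])))"
  proof -
    have "Cnt n w (Ecut n i j) ?C = (\<Sum>t\<in>UNIV. \<Sum>h'\<in>UNIV. lw (w (2*i-1) (2*j+1)) (w (2*i) (2*j+2)) ((2*j+2, 2*i-1) \<in> ?C) ((2*j+1, 2*i) \<in> ?C) t h' *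
       Cnt n w ?E' (?C \<union> {(2*j+2, 2*i-1),(2*j+1, 2*i)} \<union> (if h' then {(2*j+3, 2*i)} else {}) \<union> (if t then {(2*j+2, 2*i+1)} else {})))"
    proof -
      have d: "(2*j+1, 2*i) \<noteq> (2*j+2, 2*i-1)" "(2*j+1, 2*i) \<noteq> (2*j+3, 2*i)" "(2*j+1, 2*i) \<noteq> (2*j+2, 2*i+1)"
        "(2*j+2, 2*i-1) \<noteq> (2*j+3, 2*i)" "(2*j+2, 2*i-1) \<noteq> (2*j+2, 2*i+1)" "(2*j+3, 2*i) \<noteq> (2*j+2, 2*i+1)"
        using i by auto
      have ww: "w (fst (2*i-1, 2*j+2)) (snd (2*i-1, 2*j+2)) = 1" "w (fst (2*i, 2*j+1)) (snd (2*i, 2*j+1)) = 1"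
        using w1 by simp_all
      note c = cell[OF ec d notin finite_Ecut vN vW vE vS un cov_cell(3,4)[OF i(1), of j S h Tp] ww]
      show ?thesis unfolding Ecut_split[OF i jn] using c by simp
    qed
    also have "\<dots> = (\<Sum>t\<in>UNIV. \<Sum>h'\<in>UNIV. lw a d (S!j) h t h' * Cnt n w ?E' (Cov i (Suc j) S h' (Tp@[t])))"
      using w1 cov_cell[OF i(1)] cov_step[OF i(1) Suc.prems(2)] by simp
    finally show ?thesis .
  qed
  have IH: "Cnt n w ?E' (Cov i (Suc j) S h' (Tp@[t])) =
     (\<Sum>Tr\<in>blists (n - Suc j). rw a d h' True (drop (Suc j) S) Tr * ?X ((Tp@[t]) @ Tr))" for h' t
    using Suc.hyps(1)[where j="Suc j" and h=h' and Tp="Tp@[t]"] Suc.hyps(2) Suc.prems by simp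
  have dr: "drop j S = S!j # drop (Suc j) S" using jn lS by (simp add: Cons_nth_drop_Suc)
  have nj: "n - j = Suc (n - Suc j)" using jn by simp
  show ?case
    unfolding cellapp IH nj sum_blists_Suc dr
    by (simp add: UNIV_bool sum.distrib sum_distrib_left algebra_simps)
qed


lemma cov_last:
  assumes l: "length S = n"
  shows "(AD_verts n \<subseteq> Cov (Suc n) 0 S False []) \<longleftrightarrow> S = replicate n True"
proof
  assume sub: "AD_verts n \<subseteq> Cov (Suc n) 0 S False []"
  show "S = replicate n True"
  proof (rule nth_equalityI)
    show "length S = length (replicate n True)" using l by simp
    fix b assume b: "b < length S"
    then have i1: "1 \<le> n" using l by simp
    have pos: "(2*n, 2*b+1) \<in> AD_pos n" using b l by (auto simp: AD_pos_def)
    have "(2*b+2, 2*n+1) \<in> AD_ends (2*n, 2*b+1)" using ends_cell(3)[OF i1, of b] by simp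
    then have "(2*b+2, 2*n+1) \<in> AD_verts n" using in_verts[OF pos] by blast
    then have "(2*b+2, 2*n+1) \<in> Cov (Suc n) 0 S False []" using sub by blast
    then have "S ! b" by (simp add: Cov_def)
    then show "S ! b = replicate n True ! b" using b l by simp
  qed
next
  assume S: "S = replicate n True"
  show "AD_verts n \<subseteq> Cov (Suc n) 0 S False []"
  proof
    fix v assume v: "v \<in> AD_verts n"
    obtain x y where xy: "v = (x,y)" by force
    from verts_char[OF v] xy have
      "(even y \<and> odd x \<and> 2 \<le> y \<and> y \<le> 2*n \<and> x \<le> 2*n+1) \<or> (odd y \<and> even x \<and> 2 \<le> x \<and> x \<le> 2*n \<and> y \<le> 2*n+1)"
      by simp
    then show "v \<in> Cov (Suc n) 0 S False []"
    proof
      assume "even y \<and> odd x \<and> 2 \<le> y \<and> y \<le> 2*n \<and> x \<le> 2*n+1"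
      then show ?thesis by (auto simp: xy Cov_def)
    next
      assume V: "odd y \<and> even x \<and> 2 \<le> x \<and> x \<le> 2*n \<and> y \<le> 2*n+1"
      have "x div 2 - 1 < n" using V by auto
      then have "S ! (x div 2 - 1)" using S by simp
      moreover have "y + 1 < 2 * Suc n \<or> y + 1 = 2 * Suc n" using V by auto
      ultimately show ?thesis using V by (auto simp: xy Cov_def)
    qed
  qed
qed

lemma row_outer:
  assumes wts: "\<And>i j. 1 \<le> i \<Longrightarrow> i \<le> n \<Longrightarrow> 1 \<le> j \<Longrightarrow> j \<le> n \<Longrightarrow>
     w (2*i-1) (2*j-1) = A i \<and> w (2*i-1) (2*j) = 1 \<and> w (2*i) (2*j-1) = 1 \<and> w (2*i) (2*j) = Dd i"
  shows "1 \<le> i \<Longrightarrow> i \<le> Suc n \<Longrightarrow> length S = n \<Longrightarrow>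
    Cnt n w (Ecut n i 0) (Cov i 0 S False []) = Pt (map (\<lambda>k. (A k, Dd k)) [i..<Suc n]) S (replicate n True)"
proof (induction "Suc n - i" arbitrary: i S)
  case 0
  then have True: "i = Suc n" by simp
  have l: "length S = n" using 0 by simp
  show ?case unfolding True using cov_last[OF l] by (simp add: Ecut_last Cnt_empty)
next
  case (Suc k)
  show ?case
  proof (cases "i = Suc n")
    case True
    have l: "length S = n" using Suc.prems by simp
    show ?thesis unfolding True using cov_last[OF l] by (simp add: Ecut_last Cnt_empty)
  next
    case False
    then have i: "1 \<le> i" "i \<le> n" using Suc.prems by auto
    have "Cnt n w (Ecut n i 0) (Cov i 0 S False []) =
      (\<Sum>Tr\<in>blists n. rw (A i) (Dd i) False True S Tr * Cnt n w (Ecut n (Suc i) 0) (Cov (Suc i) 0 Tr False []))"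
      using row_inner[where n=n and i=i and w=w and a="A i" and d="Dd i" and S=S and j=0 and Tp="[]" and h=False] wts i Suc.prems by simp
    also have "\<dots> = (\<Sum>Tr\<in>blists n. rw (A i) (Dd i) False True S Tr * Pt (map (\<lambda>k. (A k, Dd k)) [Suc i..<Suc n]) Tr (replicate n True))"
    proof (rule sum.cong[OF refl])
      fix Tr assume "Tr \<in> blists n"
      then have "length Tr = n" by (simp add: blists_def)
      then show "rw (A i) (Dd i) False True S Tr * Cnt n w (Ecut n (Suc i) 0) (Cov (Suc i) 0 Tr False []) =
         rw (A i) (Dd i) False True S Tr * Pt (map (\<lambda>k. (A k, Dd k)) [Suc i..<Suc n]) Tr (replicate n True)"
        using Suc.hyps(1)[of "Suc i" Tr] Suc.hyps(2) i by simp
    qed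
    also have "\<dots> = Pt (map (\<lambda>k. (A k, Dd k)) [i..<Suc n]) S (replicate n True)"
      using i Suc.prems by (simp add: upt_conv_Cons del: upt_Suc)
    finally show ?thesis .
  qed
qed

lemma AD_M_Cnt: "AD_M n w = Cnt n w (AD_pos n) {}"
proof -
  have "{S. AD_perfect_matching n S} = {S. valid n (AD_pos n) {} S}"
  proof (intro set_eqI iffI; simp)
    fix S assume pm: "AD_perfect_matching n S"
    show "valid n (AD_pos n) {} S" unfolding valid_def
    proof (intro conjI allI)
      show "S \<subseteq> AD_pos n" using pm by (simp add: AD_perfect_matching_def)
      fix v
      show "deg S v = (if v \<in> AD_verts n - {} then 1 else 0)"
      proof (cases "v \<in> AD_verts n")
        case True then show ?thesis using pm by (simp add: AD_perfect_matching_def deg_def)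
      next
        case False
        have e0: "{e\<in>S. v \<in> AD_ends e} = {}" using False pm by (auto simp: AD_perfect_matching_def AD_verts_def)
        show ?thesis unfolding deg_def e0 using False by simp
      qed
    qed
  next
    fix S assume "valid n (AD_pos n) {} S"
    then show "AD_perfect_matching n S" unfolding AD_perfect_matching_def
      using valid_deg[of n "AD_pos n" "{}" S] by (auto simp: valid_def deg_def)
  qed
  then show ?thesis by (simp add: AD_M_def Cnt_def)
qed

lemma cov_first: "AD_verts n - {} = AD_verts n - Cov 1 0 (replicate n False) False []"
proof -
  have "v \<notin> Cov 1 0 (replicate n False) False []" if v: "v \<in> AD_verts n" for v
  proof -
    obtain x y where xy: "v = (x,y)" by force
    from verts_char[OF v] xy have
      "(even y \<and> odd x \<and> 2 \<le> y \<and> y \<le> 2*n \<and> x \<le> 2*n+1) \<or> (odd y \<and> even x \<and> 2 \<le> x \<and> x \<le> 2*n \<and> y \<le> 2*n+1)"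
      by simp
    then show ?thesis
    proof
      assume "even y \<and> odd x \<and> 2 \<le> y \<and> y \<le> 2*n \<and> x \<le> 2*n+1"
      then show ?thesis by (auto simp: xy Cov_def odd_pos)
    next
      assume V: "odd y \<and> even x \<and> 2 \<le> x \<and> x \<le> 2*n \<and> y \<le> 2*n+1"
      have "x div 2 - 1 < n" using V by auto
      then have "\<not> replicate n False ! (x div 2 - 1)" by simp
      then show ?thesis using V by (auto simp: xy Cov_def odd_pos)
    qed
  qed
  then show ?thesis by blast
qed

theorem AD_M_P:
  assumes wts: "\<And>i j. 1 \<le> i \<Longrightarrow> i \<le> n \<Longrightarrow> 1 \<le> j \<Longrightarrow> j \<le> n \<Longrightarrow>
     w (2*i-1) (2*j-1) = A i \<and> w (2*i-1) (2*j) = 1 \<and> w (2*i) (2*j-1) = 1 \<and> w (2*i) (2*j) = Dd i"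
  shows "AD_M n w = Pt (map (\<lambda>k. (A k, Dd k)) [1..<Suc n]) (replicate n False) (replicate n True)"
proof -
  have "AD_M n w = Cnt n w (Ecut n 1 0) (Cov 1 0 (replicate n False) False [])"
    unfolding AD_M_Cnt Ecut_first by (rule Cnt_cong[OF cov_first])
  also have "\<dots> = Pt (map (\<lambda>k. (A k, Dd k)) [1..<Suc n]) (replicate n False) (replicate n True)"
    by (rule row_outer[OF wts]) auto
  finally show ?thesis .
qed



definition typA :: "bsym \<Rightarrow> int" where "typA s = (if has_minus s then 0 else 1)"
definition typD :: "bsym \<Rightarrow> int" where "typD s = (if has_plus s then 0 else 1)"
definition tyq :: "bsym \<Rightarrow> int \<times> int" where "tyq s = (typA s, typD s)"

lemma AD_M_int: "int (AD_M n w) = AD_M n (\<lambda>r c. int (w r c))"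
  by (simp add: AD_M_def of_nat_sum of_nat_prod)

lemma AD_cs:
  assumes "n \<le> length cs"
  shows "int (AD_M n (wt (2*length cs) 2 (bbmat cs))) = Pt (map tyq (take n cs)) (replicate n False) (replicate n True)"
proof -
  let ?L = "length cs"
  let ?w = "\<lambda>r c. int (wt (2*?L) 2 (bbmat cs) r c)"
  have wts: "?w (2*i-1) (2*j-1) = typA (cs!(i-1)) \<and> ?w (2*i-1) (2*j) = 1 \<and> ?w (2*i) (2*j-1) = 1 \<and> ?w (2*i) (2*j) = typD (cs!(i-1))"
    if "1 \<le> i" "i \<le> n" "1 \<le> j" "j \<le> n" for i j
  proof -
    have r1: "(2*i-1-1) mod (2*?L) = 2*i-2" "(2*i-1) mod (2*?L) = 2*i-1" using that assms by auto
    have c1: "(2*j-1-1) mod 2 = 0" "(2*j-1) mod 2 = 1" using that by presburger+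
    have d1: "(2*i-2) div 2 = i-1" "(2*i-2) mod 2 = 0" "(2*i-1) div 2 = i-1" "(2*i-1) mod 2 = 1" using that by presburger+
    show ?thesis using r1 c1 d1 that
      by (simp add: wt_def bbmat_def block_entry_def typA_def typD_def)
  qed
  have "int (AD_M n (wt (2*?L) 2 (bbmat cs))) = AD_M n ?w" by (rule AD_M_int)
  also have "\<dots> = Pt (map (\<lambda>k. (typA (cs!(k-1)), typD (cs!(k-1)))) [1..<Suc n]) (replicate n False) (replicate n True)"
    by (rule AD_M_P) (use wts in blast)
  also have "map (\<lambda>k. (typA (cs!(k-1)), typD (cs!(k-1)))) [1..<Suc n] = map tyq (take n cs)"
    by (rule nth_equalityI) (use assms in \<open>auto simp: tyq_def simp del: upt_Suc\<close>)
  finally show ?thesis .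
qed

lemma r01_tyq: "r01 (map tyq cs)"
  by (auto simp: r01_def tyq_def typA_def typD_def)

lemma AD_Q:
  assumes "n \<le> length cs"
  shows "int (AD_M n (wt (2*length cs) 2 (bbmat cs))) = Q (map tyq (take n cs))"
proof -
  have "good (map tyq (take n cs))" using r01_tyq[of "take n cs"] by (rule P_Q)
  moreover have "length (map tyq (take n cs)) = n" using assms by simp
  ultimately show ?thesis using AD_cs[OF assms] unfolding good_def by simp
qed

lemma prod_snd_zip: "length xs = length ys \<Longrightarrow>
   prod_list (map (\<lambda>x. 1 + a * snd x) (zip xs ys)) = prod_list (map (\<lambda>y. 1 + (a::int) * y) ys)"
proof -
  assume l: "length xs = length ys"
  have "map (\<lambda>x. 1 + a * snd x) (zip xs ys) = map (\<lambda>y. 1 + a * y) (map snd (zip xs ys))" by simp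
  also have "map snd (zip xs ys) = ys" using l by simp
  finally show ?thesis by simp
qed

lemma Q_shift: "length as = length ds \<Longrightarrow>
  Q (zip as ds) = prod_list (map (\<lambda>(a,d). 1 + a*d) (zip as ds)) * Q (zip (butlast as) (tl ds))"
proof (induction as ds rule: list_induct2)
  case Nil then show ?case by simp
next
  case (Cons a as d ds)
  show ?case
  proof (cases as)
    case Nil
    then have "ds = []" using Cons.hyps by simp
    then show ?thesis using Nil by simp
  next
    case (Cons a2 as')
    then obtain d2 ds' where ds: "ds = d2 # ds'" using Cons.hyps by (cases ds) auto
    have l1: "length (butlast as) = length ds'" using Cons.hyps ds by simp
    have "Q (zip (a#as) (d#ds)) = (1 + a*d) * prod_list (map (\<lambda>y. 1 + a*y) ds) * Q (zip as ds)"
      using prod_snd_zip[OF Cons.hyps, of a] by simp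
    also have "\<dots> = (1 + a*d) * prod_list (map (\<lambda>y. 1 + a*y) ds) *
        (prod_list (map (\<lambda>(a,d). 1 + a*d) (zip as ds)) * Q (zip (butlast as) (tl ds)))"
      by (simp only: Cons.IH)
    also have "Q (zip (butlast (a#as)) (tl (d#ds))) = (1 + a*d2) * prod_list (map (\<lambda>y. 1 + a*y) ds') * Q (zip (butlast as) (tl ds))"
      using Cons prod_snd_zip[OF l1, of a] ds by simp
    ultimately show ?thesis using ds by (simp add: ac_simps)
  qed
qed

lemma diag_tyq: "prod_list (map (\<lambda>(a,d). 1 + a*d) (zip (map typA cs) (map typD cs))) = 2 ^ length (filter (\<lambda>s. s = Z) cs)"
proof (induction cs)
  case Nil then show ?case by simp
next
  case (Cons s cs) then show ?case
    by (cases s) (simp_all add: typA_def typD_def has_plus_def has_minus_def)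
qed

lemma map_tyq: "map tyq cs = zip (map typA cs) (map typD cs)"
  by (induction cs) (simp_all add: tyq_def)

lemma mk_sym_props: "has_plus (mk_sym p m) = p" "has_minus (mk_sym p m) = m"
  by (auto simp: mk_sym_def has_plus_def has_minus_def)

lemma sh_tyq:
  assumes l: "length cs = m" and m: "m \<ge> 1"
  shows "map tyq (take (m-1) (shcode cs)) = zip (butlast (map typA cs)) (tl (map typD cs))"
proof (rule nth_equalityI)
  show "length (map tyq (take (m-1) (shcode cs))) = length (zip (butlast (map typA cs)) (tl (map typD cs)))"
    using l by (simp add: shcode_def Let_def)
next
  fix k assume "k < length (map tyq (take (m-1) (shcode cs)))"
  then have k: "k < m - 1" using l by (simp add: shcode_def Let_def)
  then have "(k+1) mod m = k+1" by simp
  then show "map tyq (take (m-1) (shcode cs)) ! k = zip (butlast (map typA cs)) (tl (map typD cs)) ! k"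
    using k l by (simp add: shcode_def Let_def tyq_def typA_def typD_def mk_sym_props nth_butlast nth_tl)
qed

theorem lemma3p3:
  fixes cs :: "bsym list" and m :: nat
  assumes "m \<ge> 1" and "length cs = m"
  shows "(AD_M m (wt (2*m) 2 (bbmat cs)) :: nat) =
           2 ^ length (filter (\<lambda>s. s = Z) cs) * AD_M (m - 1) (wt (2*m) 2 (bbmat (shcode cs)))"
proof -
  have ls: "length (shcode cs) = m" using assms by (simp add: shcode_def Let_def)
  have L: "int (AD_M m (wt (2*m) 2 (bbmat cs))) = Q (map tyq cs)"
    using AD_Q[of m cs] assms by simp
  have R: "int (AD_M (m-1) (wt (2*m) 2 (bbmat (shcode cs)))) = Q (map tyq (take (m-1) (shcode cs)))"
    using AD_Q[of "m-1" "shcode cs"] ls by simp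
  have "Q (map tyq cs) = 2 ^ length (filter (\<lambda>s. s = Z) cs) * Q (map tyq (take (m-1) (shcode cs)))"
  proof -
    have s: "map tyq (take (m-1) (shcode cs)) = zip (butlast (map typA cs)) (tl (map typD cs))"
      by (rule sh_tyq[OF assms(2,1)])
    have "Q (map tyq cs) = Q (zip (map typA cs) (map typD cs))" by (simp only: map_tyq)
    also have "\<dots> = prod_list (map (\<lambda>(a,d). 1 + a*d) (zip (map typA cs) (map typD cs))) *
        Q (zip (butlast (map typA cs)) (tl (map typD cs)))" by (rule Q_shift) simp
    also have "\<dots> = 2 ^ length (filter (\<lambda>s. s = Z) cs) * Q (map tyq (take (m-1) (shcode cs)))"
      by (simp only: diag_tyq s)
    finally show ?thesis .
  qed
  then have "int (AD_M m (wt (2*m) 2 (bbmat cs))) = int (2 ^ length (filter (\<lambda>s. s = Z) cs) * AD_M (m - 1) (wt (2*m) 2 (bbmat (shcode cs))))"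
    using L R by simp
  then show ?thesis by (simp only: of_nat_eq_iff)
qed


end
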